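(* Let $A=(X,\mathcal M,S,O)$ be a no-signalling empirical theory with $X$ finite, and let $B=(\Omega,\mu,\xi)$ be a factorizable, non-contextual ontological representation of $Op(A)$. Then the family $$d^\sigma(s):=\sum_{\lambda\in\Omega}\Big(\prod_{x\in X}\xi_{\{x\}}(\lambda)(s(x))\Big)\mu_\sigma(\lambda),\qquad s\in O^X,\ \sigma\in S,$$ is a global section of $A$; in particular $A$ is sheaf-theoretically non-contextual, and the canonical ontological representation of $Op(A)$ built from a global section of $A$ realises the same operational theory as $B$, namely $\sum_t\xi^{can}_U(t)(s)\mu^{can}_\sigma(t)=\sum_{\lambda\in\Omega}\xi_U(\lambda)(s)\mu_\sigma(\lambda)$ for all $\sigma$, $U$, $s$.
   Context: Fix a finite outcome set $O$. A system type is a set $X$ of measurement labels with a measurement cover $\mathcal M$ (subsets of $X$ with union $X$, none a proper subset of another); $U\subseteq X$ is jointly measurable if $U\subseteq C$ for some $C\in\mathcal M$. $O^U$ is the set of functions $U\to O$; $e|_U$ is the marginal on $O^U$ of a distribution $e$ on $O^V$, $U\subseteq V$. A state is a family of distributions $\sigma_C$ on $O^C$ ($C\in\mathcal M$), no-signalling if $\sigma_C|_{C\cap C'}=\sigma_{C'}|_{C\cap C'}$, in which case $\sigma_U:=\sigma_C|_U$ for jointly measurable $U\subseteq C$. An empirical theory $A=(X,\mathcal M,S,O)$ has a set $S$ of states; a global section is a family $d^\sigma$ of distributions on $O^X$ with $d^\sigma|_C=\sigma_C$ for all $C,\sigma$. Statistical equivalence: $\sigma\sim\sigma'$ iff $\sigma_C=\sigma'_C\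 \forall C$; $x\sim x'$ iff $\sigma_{\{x\}}=\sigma_{\{x'\}}\ \forall\sigma$. $Op(A)$ is the operational theory with preparations $S$, measurements the nonempty jointly measurable $U\subseteq X$, outcome set $O^U$ for $U$, and $d_{\sigma,U}(s)=\sigma_U(s)$. An ontological representation of an operational theory with preparations $P$, measurements $M$, outcome sets $O^m$ and statistics $d_{p,m}$ is $(\Omega,\mu,\xi)$ with $\Omega$ countable, distributions $\mu_p$ on $\Omega$, $\xi_m(\lambda)$ on $O^m$, satisfying $\sum_\lambda\xi_m(\lambda)(k)\mu_p(\lambda)=d_{p,m}(k)$; it is non-contextual if statistically equivalent preparations ($d_{p,\cdot}=d_{p',\cdot}$) have equal $\mu$ and statistically equivalent outcomes ($d_{\cdot,m}(k)=d_{\cdot,m'}(k')$) have equal $\xi_m(\lambda)(k)=\xi_{m'}(\lambda)(k')$ for all $\lambda$. A representation of $Op(A)$ is factorizable if $\xi_U(\lambda)(s)=\prod_{x\in U}\xi_{\{x\}}(\lambda)(s(x))$. Canonical representation: for a global section $d$ with $d^\sigma(s)=0$ whenever $s(x)\ne s(x')$ for some $x\sim x'$ and $d^\sigma=d^{\sigma'}$ when $\sigma\sim\sigma'$, and $q:X\to X/{\sim}$ the quotient map, it is given by $\Omega^{can}=\{t:X/{\sim}\to O\}$ (restricted to points in some support), $\mu^{can}_\sigma(t)=d^\sigma(t\circ q)$, $\xi^{can}_U(t)(s)=1$ if $s=(t\circ q)|_U$ and $0$ otherwise. *)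

theory Defs
  imports "HOL-Analysis.Analysis"
begin

(* Measurement labels have type 'x, outcomes type 'o, states type 's,
   ontic states type 'l.  An element of O^U (a function U -> O) is an
   extensional function 'x => 'o, i.e. an element of  U ->\<^sub>E O. *)

definition distr_on :: "'a set \<Rightarrow> ('a \<Rightarrow> real) \<Rightarrow> bool" where
  "distr_on V e \<longleftrightarrow> finite V \<and> (\<forall>v\<in>V. 0 \<le> e v) \<and> sum e V = 1"

definition pt :: "'x \<Rightarrow> 'o \<Rightarrow> ('x \<Rightarrow> 'o)" where
  "pt x a = (\<lambda>y. if y = x then a else undefined)"

definition marg :: "'o set \<Rightarrow> 'x set \<Rightarrow> 'x set \<Rightarrow> (('x \<Rightarrow> 'o) \<Rightarrow> real) \<Rightarrow> ('x \<Rightarrow> 'o) \<Rightarrow> real" where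
  "marg Oc V U e t = (\<Sum>s\<in>{s \<in> V \<rightarrow>\<^sub>E Oc. restrict s U = t}. e s)"

definition jointly_measurable :: "'x set set \<Rightarrow> 'x set \<Rightarrow> bool" where
  "jointly_measurable M U \<longleftrightarrow> (\<exists>C\<in>M. U \<subseteq> C)"

(* empirical theory A = (X, M, S, O); the state sigma is given by the family
   st sigma C (C \<in> M), a distribution on O^C *)
definition empirical_theory ::
  "'x set \<Rightarrow> 'x set set \<Rightarrow> 's set \<Rightarrow> 'o set \<Rightarrow> ('s \<Rightarrow> 'x set \<Rightarrow> ('x \<Rightarrow> 'o) \<Rightarrow> real) \<Rightarrow> bool" where
  "empirical_theory X M S Oc st \<longleftrightarrow>
     finite Oc \<and>
     (\<forall>C\<in>M. C \<subseteq> X) \<and> \<Union>M = X \<and> (\<forall>C\<in>M. \<forall>C'\<in>M. \<not> C \<subset> C') \<and>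
     (\<forall>\<sigma>\<in>S. \<forall>C\<in>M. distr_on (C \<rightarrow>\<^sub>E Oc) (st \<sigma> C))"

definition no_signalling ::
  "'x set set \<Rightarrow> 's set \<Rightarrow> 'o set \<Rightarrow> ('s \<Rightarrow> 'x set \<Rightarrow> ('x \<Rightarrow> 'o) \<Rightarrow> real) \<Rightarrow> bool" where
  "no_signalling M S Oc st \<longleftrightarrow>
     (\<forall>\<sigma>\<in>S. \<forall>C\<in>M. \<forall>C'\<in>M. \<forall>t\<in>(C \<inter> C') \<rightarrow>\<^sub>E Oc.
        marg Oc C (C \<inter> C') (st \<sigma> C) t = marg Oc C' (C \<inter> C') (st \<sigma> C') t)"

(* sigma_U := sigma_C|_U for a (chosen) context C \<supseteq> U; well defined under no-signalling *)
definition state_on ::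
  "'x set set \<Rightarrow> 'o set \<Rightarrow> ('s \<Rightarrow> 'x set \<Rightarrow> ('x \<Rightarrow> 'o) \<Rightarrow> real) \<Rightarrow> 's \<Rightarrow> 'x set \<Rightarrow> ('x \<Rightarrow> 'o) \<Rightarrow> real" where
  "state_on M Oc st \<sigma> U = marg Oc (SOME C. C \<in> M \<and> U \<subseteq> C) U (st \<sigma> (SOME C. C \<in> M \<and> U \<subseteq> C))"

definition global_section ::
  "'x set \<Rightarrow> 'x set set \<Rightarrow> 's set \<Rightarrow> 'o set \<Rightarrow> ('s \<Rightarrow> 'x set \<Rightarrow> ('x \<Rightarrow> 'o) \<Rightarrow> real)
     \<Rightarrow> ('s \<Rightarrow> ('x \<Rightarrow> 'o) \<Rightarrow> real) \<Rightarrow> bool" where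
  "global_section X M S Oc st d \<longleftrightarrow>
     (\<forall>\<sigma>\<in>S. distr_on (X \<rightarrow>\<^sub>E Oc) (d \<sigma>) \<and>
        (\<forall>C\<in>M. \<forall>t\<in>C \<rightarrow>\<^sub>E Oc. marg Oc X C (d \<sigma>) t = st \<sigma> C t))"

definition sheaf_noncontextual ::
  "'x set \<Rightarrow> 'x set set \<Rightarrow> 's set \<Rightarrow> 'o set \<Rightarrow> ('s \<Rightarrow> 'x set \<Rightarrow> ('x \<Rightarrow> 'o) \<Rightarrow> real) \<Rightarrow> bool" where
  "sheaf_noncontextual X M S Oc st \<longleftrightarrow> (\<exists>d. global_section X M S Oc st d)"

(* preparations P, measurements Ms, outcome sets Out m, statistics d p m k *)
definition ontological_rep ::
  "'p set \<Rightarrow> 'm set \<Rightarrow> ('m \<Rightarrow> 'k set) \<Rightarrow> ('p \<Rightarrow> 'm \<Rightarrow> 'k \<Rightarrow> real)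
     \<Rightarrow> 'l set \<Rightarrow> ('p \<Rightarrow> 'l \<Rightarrow> real) \<Rightarrow> ('m \<Rightarrow> 'l \<Rightarrow> 'k \<Rightarrow> real) \<Rightarrow> bool" where
  "ontological_rep P Ms Out d \<Omega> \<mu> \<xi> \<longleftrightarrow>
     countable \<Omega> \<and>
     (\<forall>p\<in>P. (\<forall>l\<in>\<Omega>. 0 \<le> \<mu> p l) \<and> (\<mu> p has_sum 1) \<Omega>) \<and>
     (\<forall>m\<in>Ms. \<forall>l\<in>\<Omega>. distr_on (Out m) (\<xi> m l)) \<and>
     (\<forall>p\<in>P. \<forall>m\<in>Ms. \<forall>k\<in>Out m. ((\<lambda>l. \<xi> m l k * \<mu> p l) has_sum d p m k) \<Omega>)"

definition noncontextual_rep ::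
  "'p set \<Rightarrow> 'm set \<Rightarrow> ('m \<Rightarrow> 'k set) \<Rightarrow> ('p \<Rightarrow> 'm \<Rightarrow> 'k \<Rightarrow> real)
     \<Rightarrow> 'l set \<Rightarrow> ('p \<Rightarrow> 'l \<Rightarrow> real) \<Rightarrow> ('m \<Rightarrow> 'l \<Rightarrow> 'k \<Rightarrow> real) \<Rightarrow> bool" where
  "noncontextual_rep P Ms Out d \<Omega> \<mu> \<xi> \<longleftrightarrow>
     (\<forall>p\<in>P. \<forall>p'\<in>P. (\<forall>m\<in>Ms. \<forall>k\<in>Out m. d p m k = d p' m k) \<longrightarrow> (\<forall>l\<in>\<Omega>. \<mu> p l = \<mu> p' l)) \<and>
     (\<forall>m\<in>Ms. \<forall>m'\<in>Ms. \<forall>k\<in>Out m. \<forall>k'\<in>Out m'.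
        (\<forall>p\<in>P. d p m k = d p m' k') \<longrightarrow> (\<forall>l\<in>\<Omega>. \<xi> m l k = \<xi> m' l k'))"

definition Op_meas :: "'x set set \<Rightarrow> 'x set set" where
  "Op_meas M = {U. U \<noteq> {} \<and> jointly_measurable M U}"

definition Op_out :: "'o set \<Rightarrow> 'x set \<Rightarrow> ('x \<Rightarrow> 'o) set" where
  "Op_out Oc U = U \<rightarrow>\<^sub>E Oc"

definition Op_stat ::
  "'x set set \<Rightarrow> 'o set \<Rightarrow> ('s \<Rightarrow> 'x set \<Rightarrow> ('x \<Rightarrow> 'o) \<Rightarrow> real) \<Rightarrow> 's \<Rightarrow> 'x set \<Rightarrow> ('x \<Rightarrow> 'o) \<Rightarrow> real" where
  "Op_stat M Oc st = state_on M Oc st"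

definition factorizable ::
  "'x set set \<Rightarrow> 'o set \<Rightarrow> 'l set \<Rightarrow> ('x set \<Rightarrow> 'l \<Rightarrow> ('x \<Rightarrow> 'o) \<Rightarrow> real) \<Rightarrow> bool" where
  "factorizable M Oc \<Omega> \<xi> \<longleftrightarrow>
     (\<forall>U\<in>Op_meas M. \<forall>l\<in>\<Omega>. \<forall>s\<in>U \<rightarrow>\<^sub>E Oc. \<xi> U l s = (\<Prod>x\<in>U. \<xi> {x} l (pt x (s x))))"

definition induced_section ::
  "'x set \<Rightarrow> 'l set \<Rightarrow> ('s \<Rightarrow> 'l \<Rightarrow> real) \<Rightarrow> ('x set \<Rightarrow> 'l \<Rightarrow> ('x \<Rightarrow> 'o) \<Rightarrow> real)
     \<Rightarrow> 's \<Rightarrow> ('x \<Rightarrow> 'o) \<Rightarrow> real" where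
  "induced_section X \<Omega> \<mu> \<xi> \<sigma> s = (\<Sum>\<^sub>\<infinity>l\<in>\<Omega>. (\<Prod>x\<in>X. \<xi> {x} l (pt x (s x))) * \<mu> \<sigma> l)"

definition label_equiv ::
  "'x set \<Rightarrow> 'x set set \<Rightarrow> 's set \<Rightarrow> 'o set \<Rightarrow> ('s \<Rightarrow> 'x set \<Rightarrow> ('x \<Rightarrow> 'o) \<Rightarrow> real) \<Rightarrow> ('x \<times> 'x) set" where
  "label_equiv X M S Oc st = {(x, x'). x \<in> X \<and> x' \<in> X \<and>
     (\<forall>\<sigma>\<in>S. \<forall>a\<in>Oc. state_on M Oc st \<sigma> {x} (pt x a) = state_on M Oc st \<sigma> {x'} (pt x' a))}"

definition state_equiv ::
  "'x set set \<Rightarrow> 'o set \<Rightarrow> ('s \<Rightarrow> 'x set \<Rightarrow> ('x \<Rightarrow> 'o) \<Rightarrow> real) \<Rightarrow> 's \<Rightarrow> 's \<Rightarrow> bool" where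
  "state_equiv M Oc st \<sigma> \<sigma>' \<longleftrightarrow> (\<forall>C\<in>M. \<forall>t\<in>C \<rightarrow>\<^sub>E Oc. st \<sigma> C t = st \<sigma>' C t)"

definition canonical_admissible ::
  "'x set \<Rightarrow> 'x set set \<Rightarrow> 's set \<Rightarrow> 'o set \<Rightarrow> ('s \<Rightarrow> 'x set \<Rightarrow> ('x \<Rightarrow> 'o) \<Rightarrow> real)
     \<Rightarrow> ('s \<Rightarrow> ('x \<Rightarrow> 'o) \<Rightarrow> real) \<Rightarrow> bool" where
  "canonical_admissible X M S Oc st d \<longleftrightarrow>
     (\<forall>\<sigma>\<in>S. \<forall>s\<in>X \<rightarrow>\<^sub>E Oc.
        (\<exists>(x, x')\<in>label_equiv X M S Oc st. s x \<noteq> s x') \<longrightarrow> d \<sigma> s = 0) \<and>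
     (\<forall>\<sigma>\<in>S. \<forall>\<sigma>'\<in>S. state_equiv M Oc st \<sigma> \<sigma>' \<longrightarrow> (\<forall>s\<in>X \<rightarrow>\<^sub>E Oc. d \<sigma> s = d \<sigma>' s))"

definition label_quot ::
  "'x set \<Rightarrow> 'x set set \<Rightarrow> 's set \<Rightarrow> 'o set \<Rightarrow> ('s \<Rightarrow> 'x set \<Rightarrow> ('x \<Rightarrow> 'o) \<Rightarrow> real) \<Rightarrow> 'x set set" where
  "label_quot X M S Oc st = X // label_equiv X M S Oc st"

definition qmap ::
  "'x set \<Rightarrow> 'x set set \<Rightarrow> 's set \<Rightarrow> 'o set \<Rightarrow> ('s \<Rightarrow> 'x set \<Rightarrow> ('x \<Rightarrow> 'o) \<Rightarrow> real) \<Rightarrow> 'x \<Rightarrow> 'x set" where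
  "qmap X M S Oc st x = label_equiv X M S Oc st `` {x}"

definition Omega_can ::
  "'x set \<Rightarrow> 'x set set \<Rightarrow> 's set \<Rightarrow> 'o set \<Rightarrow> ('s \<Rightarrow> 'x set \<Rightarrow> ('x \<Rightarrow> 'o) \<Rightarrow> real) \<Rightarrow> ('x set \<Rightarrow> 'o) set" where
  "Omega_can X M S Oc st = label_quot X M S Oc st \<rightarrow>\<^sub>E Oc"

definition lift_can ::
  "'x set \<Rightarrow> 'x set set \<Rightarrow> 's set \<Rightarrow> 'o set \<Rightarrow> ('s \<Rightarrow> 'x set \<Rightarrow> ('x \<Rightarrow> 'o) \<Rightarrow> real)
     \<Rightarrow> ('x set \<Rightarrow> 'o) \<Rightarrow> ('x \<Rightarrow> 'o)" where
  "lift_can X M S Oc st t = restrict (\<lambda>x. t (qmap X M S Oc st x)) X"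

definition mu_can ::
  "'x set \<Rightarrow> 'x set set \<Rightarrow> 's set \<Rightarrow> 'o set \<Rightarrow> ('s \<Rightarrow> 'x set \<Rightarrow> ('x \<Rightarrow> 'o) \<Rightarrow> real)
     \<Rightarrow> ('s \<Rightarrow> ('x \<Rightarrow> 'o) \<Rightarrow> real) \<Rightarrow> 's \<Rightarrow> ('x set \<Rightarrow> 'o) \<Rightarrow> real" where
  "mu_can X M S Oc st d \<sigma> t = d \<sigma> (lift_can X M S Oc st t)"

definition xi_can ::
  "'x set \<Rightarrow> 'x set set \<Rightarrow> 's set \<Rightarrow> 'o set \<Rightarrow> ('s \<Rightarrow> 'x set \<Rightarrow> ('x \<Rightarrow> 'o) \<Rightarrow> real)
     \<Rightarrow> 'x set \<Rightarrow> ('x set \<Rightarrow> 'o) \<Rightarrow> ('x \<Rightarrow> 'o) \<Rightarrow> real" where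
  "xi_can X M S Oc st U t s = (if s = restrict (lift_can X M S Oc st t) U then 1 else 0)"

end

theory Submission
  imports Defs
begin

lemma summable_finite_sum:
  fixes f :: "'i \<Rightarrow> 'a \<Rightarrow> real"
  assumes "finite I" "\<And>i. i \<in> I \<Longrightarrow> f i summable_on A"
  shows "(\<lambda>x. \<Sum>i\<in>I. f i x) summable_on A"
  using assms
proof (induction I rule: finite_induct)
  case empty then show ?case by simp
next
  case (insert k K)
  then show ?case by (simp add: summable_on_add)
qed

lemma infsum_finite_sum:
  fixes f :: "'i \<Rightarrow> 'a \<Rightarrow> real"
  assumes "finite I" "\<And>i. i \<in> I \<Longrightarrow> f i summable_on A"
  shows "infsum (\<lambda>x. \<Sum>i\<in>I. f i x) A = (\<Sum>i\<in>I. infsum (f i) A)"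
  using assms
proof (induction I rule: finite_induct)
  case empty then show ?case by simp
next
  case (insert j I)
  have s: "(\<lambda>x. \<Sum>i\<in>I. f i x) summable_on A"
    using insert by (intro summable_finite_sum) auto
  have "infsum (\<lambda>x. \<Sum>i\<in>insert j I. f i x) A = infsum (\<lambda>x. f j x + (\<Sum>i\<in>I. f i x)) A"
    using insert.hyps by simp
  also have "\<dots> = infsum (f j) A + infsum (\<lambda>x. \<Sum>i\<in>I. f i x) A"
    using s insert.prems by (intro infsum_add) auto
  finally show ?case using insert by simp
qed

lemma pt_image: "{x} \<rightarrow>\<^sub>E Oc = pt x ` Oc"
proof
  show "{x} \<rightarrow>\<^sub>E Oc \<subseteq> pt x ` Oc"
  proof
    fix f assume f: "f \<in> {x} \<rightarrow>\<^sub>E Oc"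
    have "f = pt x (f x)" using f by (auto simp: pt_def PiE_def extensional_def)
    then show "f \<in> pt x ` Oc" using f by auto
  qed
qed (auto simp: pt_def PiE_iff extensional_def split: if_splits)

lemma pt_inj: "inj_on (pt x) Oc"
  by (auto simp: inj_on_def pt_def fun_eq_iff)

lemma sum_pt: "sum g ({x} \<rightarrow>\<^sub>E Oc) = (\<Sum>a\<in>Oc. g (pt x a))"
  by (simp add: pt_image sum.reindex[OF pt_inj])

lemma pt_mem: "a \<in> Oc \<Longrightarrow> pt x a \<in> {x} \<rightarrow>\<^sub>E Oc"
  by (simp add: pt_def PiE_iff extensional_def)

lemma fiber_PiE:
  assumes "C \<subseteq> X" "t \<in> C \<rightarrow>\<^sub>E Oc"
  shows "{s \<in> X \<rightarrow>\<^sub>E Oc. restrict s C = t} = PiE X (\<lambda>x. if x \<in> C then {t x} else Oc)"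
proof (intro set_eqI iffI)
  fix s assume "s \<in> {s \<in> X \<rightarrow>\<^sub>E Oc. restrict s C = t}"
  then show "s \<in> PiE X (\<lambda>x. if x \<in> C then {t x} else Oc)"
    by (auto simp: PiE_def fun_eq_iff restrict_def split: if_splits)
next
  fix s assume s: "s \<in> PiE X (\<lambda>x. if x \<in> C then {t x} else Oc)"
  have "s \<in> X \<rightarrow>\<^sub>E Oc" using s assms by (auto simp: PiE_def Pi_def split: if_splits)
  moreover have "restrict s C = t"
  proof
    fix y show "restrict s C y = t y"
      using s assms by (cases "y \<in> C") (auto simp: PiE_def Pi_def extensional_def)
  qed
  ultimately show "s \<in> {s \<in> X \<rightarrow>\<^sub>E Oc. restrict s C = t}" by simp
qed

lemma marg_prod:
  fixes f :: "'x \<Rightarrow> 'o \<Rightarrow> real"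
  assumes "finite X" "finite Oc" "C \<subseteq> X" "t \<in> C \<rightarrow>\<^sub>E Oc"
  shows "(\<Sum>s\<in>{s \<in> X \<rightarrow>\<^sub>E Oc. restrict s C = t}. \<Prod>x\<in>X. f x (s x))
       = (\<Prod>x\<in>C. f x (t x)) * (\<Prod>x\<in>X - C. \<Sum>a\<in>Oc. f x a)"
proof -
  let ?B = "\<lambda>x. if x \<in> C then {t x} else Oc"
  have "(\<Sum>s\<in>{s \<in> X \<rightarrow>\<^sub>E Oc. restrict s C = t}. \<Prod>x\<in>X. f x (s x))
      = (\<Prod>x\<in>X. \<Sum>y\<in>?B x. f x y)"
    using assms by (simp add: fiber_PiE prod_sum_PiE)
  also have "\<dots> = (\<Prod>x\<in>X - C. \<Sum>y\<in>?B x. f x y) * (\<Prod>x\<in>C. \<Sum>y\<in>?B x. f x y)"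
    using assms by (simp add: prod.subset_diff)
  also have "\<dots> = (\<Prod>x\<in>C. f x (t x)) * (\<Prod>x\<in>X - C. \<Sum>a\<in>Oc. f x a)"
    by (simp add: mult.commute)
  finally show ?thesis .
qed

lemma marg_self:
  assumes "t \<in> C \<rightarrow>\<^sub>E Oc"
  shows "marg Oc C C e t = e t"
proof -
  have "{s \<in> C \<rightarrow>\<^sub>E Oc. restrict s C = t} = {t}"
    using assms by auto
  then show ?thesis by (simp add: marg_def)
qed

lemma marg_cong:
  assumes "\<And>r. r \<in> C \<rightarrow>\<^sub>E Oc \<Longrightarrow> e r = e' r"
  shows "marg Oc C U e t = marg Oc C U e' t"
  unfolding marg_def using assms by (intro sum.cong) auto

lemma marg_trans:
  assumes "U \<subseteq> C" "C \<subseteq> X" "finite X" "finite Oc"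
  shows "marg Oc C U (\<lambda>r. marg Oc X C e r) t = marg Oc X U e t"
proof -
  let ?S = "{s \<in> X \<rightarrow>\<^sub>E Oc. restrict s U = t}"
  let ?T = "{r \<in> C \<rightarrow>\<^sub>E Oc. restrict r U = t}"
  have fS: "finite ?S" using assms by (simp add: finite_PiE)
  have fT: "finite ?T" using assms by (simp add: finite_PiE finite_subset)
  have img: "(\<lambda>s. restrict s C) ` ?S \<subseteq> ?T"
    using assms by (auto simp: restrict_def fun_eq_iff PiE_def Pi_def extensional_def)
  have "sum (\<lambda>r. sum e {s. s \<in> ?S \<and> restrict s C = r}) ?T = sum e ?S"
    by (rule sum.group[OF fS fT img])
  moreover have "\<And>r. r \<in> ?T \<Longrightarrow> {s. s \<in> ?S \<and> restrict s C = r} = {s \<in> X \<rightarrow>\<^sub>E Oc. restrict s C = r}"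
  proof -
    fix r assume r: "r \<in> ?T"
    show "{s. s \<in> ?S \<and> restrict s C = r} = {s \<in> X \<rightarrow>\<^sub>E Oc. restrict s C = r}"
    proof (intro set_eqI iffI)
      fix s assume "s \<in> {s \<in> X \<rightarrow>\<^sub>E Oc. restrict s C = r}"
      then have "restrict s U = restrict r U" using assms(1) by (auto simp: restrict_def fun_eq_iff) (metis subsetD)
      then show "s \<in> {s. s \<in> ?S \<and> restrict s C = r}" using r \<open>s \<in> _\<close> by auto
    qed auto
  qed
  ultimately show ?thesis unfolding marg_def by (metis (no_types, lifting) sum.cong)
qed


theorem mainTheorem6:
  fixes X :: "'x set" and M :: "'x set set" and S :: "'s set" and Oc :: "'o set"
    and st :: "'s \<Rightarrow> 'x set \<Rightarrow> ('x \<Rightarrow> 'o) \<Rightarrow> real"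
    and \<Omega> :: "'l set" and \<mu> :: "'s \<Rightarrow> 'l \<Rightarrow> real"
    and \<xi> :: "'x set \<Rightarrow> 'l \<Rightarrow> ('x \<Rightarrow> 'o) \<Rightarrow> real"
  assumes A: "empirical_theory X M S Oc st"
    and NS: "no_signalling M S Oc st"
    and finX: "finite X"
    and rep: "ontological_rep S (Op_meas M) (Op_out Oc) (Op_stat M Oc st) \<Omega> \<mu> \<xi>"
    and nc: "noncontextual_rep S (Op_meas M) (Op_out Oc) (Op_stat M Oc st) \<Omega> \<mu> \<xi>"
    and fac: "factorizable M Oc \<Omega> \<xi>"
  shows "global_section X M S Oc st (induced_section X \<Omega> \<mu> \<xi>)
    \<and> sheaf_noncontextual X M S Oc st
    \<and> (\<forall>d. global_section X M S Oc st d \<and> canonical_admissible X M S Oc st d \<longrightarrow>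
         (\<forall>\<sigma>\<in>S. \<forall>U\<in>Op_meas M. \<forall>s\<in>Op_out Oc U.
            (\<Sum>t\<in>Omega_can X M S Oc st. xi_can X M S Oc st U t s * mu_can X M S Oc st d \<sigma> t)
            = (\<Sum>\<^sub>\<infinity>l\<in>\<Omega>. \<xi> U l s * \<mu> \<sigma> l)))"
proof -
  have finO: "finite Oc" and CX: "\<And>C. C \<in> M \<Longrightarrow> C \<subseteq> X" and UM: "\<Union>M = X"
    and nprop: "\<And>C C'. C \<in> M \<Longrightarrow> C' \<in> M \<Longrightarrow> \<not> C \<subset> C'"
    and stD: "\<And>\<sigma> C. \<sigma> \<in> S \<Longrightarrow> C \<in> M \<Longrightarrow> distr_on (C \<rightarrow>\<^sub>E Oc) (st \<sigma> C)"
    using A unfolding empirical_theory_def by auto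
  have muN: "\<And>\<sigma> l. \<sigma> \<in> S \<Longrightarrow> l \<in> \<Omega> \<Longrightarrow> 0 \<le> \<mu> \<sigma> l"
    and muS: "\<And>\<sigma>. \<sigma> \<in> S \<Longrightarrow> (\<mu> \<sigma> has_sum 1) \<Omega>"
    and xiD: "\<And>m l. m \<in> Op_meas M \<Longrightarrow> l \<in> \<Omega> \<Longrightarrow> distr_on (Op_out Oc m) (\<xi> m l)"
    and stat: "\<And>\<sigma> m k. \<sigma> \<in> S \<Longrightarrow> m \<in> Op_meas M \<Longrightarrow> k \<in> Op_out Oc m \<Longrightarrow>
          ((\<lambda>l. \<xi> m l k * \<mu> \<sigma> l) has_sum Op_stat M Oc st \<sigma> m k) \<Omega>"
    using rep unfolding ontological_rep_def by auto
  have facD: "\<And>U l s. U \<in> Op_meas M \<Longrightarrow> l \<in> \<Omega> \<Longrightarrow> s \<in> U \<rightarrow>\<^sub>E Oc \<Longrightarrow>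
      \<xi> U l s = (\<Prod>x\<in>U. \<xi> {x} l (pt x (s x)))"
    using fac unfolding factorizable_def by blast
  have singl: "\<And>x. x \<in> X \<Longrightarrow> {x} \<in> Op_meas M"
    using UM by (auto simp: Op_meas_def jointly_measurable_def)
  have xi1: "\<And>x l. x \<in> X \<Longrightarrow> l \<in> \<Omega> \<Longrightarrow> (\<Sum>a\<in>Oc. \<xi> {x} l (pt x a)) = 1"
    using xiD[OF singl] by (simp add: distr_on_def Op_out_def sum_pt)
  have xi0: "0 \<le> \<xi> {x} l (pt x a)" if "x \<in> X" "l \<in> \<Omega>" "a \<in> Oc" for x l a
  proof -
    have "pt x a \<in> {x} \<rightarrow>\<^sub>E Oc" using that(3) by (rule pt_mem)
    moreover have "\<forall>v\<in>{x} \<rightarrow>\<^sub>E Oc. 0 \<le> \<xi> {x} l v"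
      using xiD[OF singl[OF that(1)] that(2)] by (simp add: distr_on_def Op_out_def)
    ultimately show ?thesis by blast
  qed
  have xile: "\<xi> {x} l (pt x a) \<le> 1" if "x \<in> X" "l \<in> \<Omega>" "a \<in> Oc" for x l a
  proof -
    have "\<xi> {x} l (pt x a) \<le> (\<Sum>a\<in>Oc. \<xi> {x} l (pt x a))"
      using that finO xi0 by (intro member_le_sum) auto
    then show ?thesis using xi1 that by simp
  qed
  define F where "F l s = (\<Prod>x\<in>X. \<xi> {x} l (pt x (s x)))" for l s
  have F01: "0 \<le> F l s \<and> F l s \<le> 1" if "l \<in> \<Omega>" "s \<in> X \<rightarrow>\<^sub>E Oc" for l s
  proof -
    have "\<And>x. x \<in> X \<Longrightarrow> s x \<in> Oc" using that(2) by (rule PiE_mem)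
    then show ?thesis
      unfolding F_def using that(1) xi0 xile by (auto intro!: prod_nonneg prod_le_1)
  qed
  have summ: "(\<lambda>l. F l s * \<mu> \<sigma> l) summable_on \<Omega>" if "\<sigma> \<in> S" "s \<in> X \<rightarrow>\<^sub>E Oc" for \<sigma> s
  proof (rule summable_on_comparison_test)
    show "\<mu> \<sigma> summable_on \<Omega>" using muS[OF that(1)] by (rule has_sum_imp_summable)
    show "F l s * \<mu> \<sigma> l \<le> \<mu> \<sigma> l" if "l \<in> \<Omega>" for l
      using F01[OF that \<open>s \<in> _\<close>] muN[OF \<open>\<sigma> \<in> S\<close> that] by (simp add: mult_left_le_one_le)
    show "0 \<le> F l s * \<mu> \<sigma> l" if "l \<in> \<Omega>" for l
      using F01[OF that \<open>s \<in> _\<close>] muN[OF \<open>\<sigma> \<in> S\<close> that] by simp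
  qed
  have ind: "induced_section X \<Omega> \<mu> \<xi> \<sigma> s = (\<Sum>\<^sub>\<infinity>l\<in>\<Omega>. F l s * \<mu> \<sigma> l)" for \<sigma> s
    by (simp add: induced_section_def F_def)
  have M1: "marg Oc X C (induced_section X \<Omega> \<mu> \<xi> \<sigma>) t
      = (\<Sum>\<^sub>\<infinity>l\<in>\<Omega>. (\<Prod>x\<in>C. \<xi> {x} l (pt x (t x))) * \<mu> \<sigma> l)"
    if \<sigma>: "\<sigma> \<in> S" and C: "C \<subseteq> X" and t: "t \<in> C \<rightarrow>\<^sub>E Oc" for \<sigma> C t
  proof -
    let ?Set = "{s \<in> X \<rightarrow>\<^sub>E Oc. restrict s C = t}"
    have fin: "finite ?Set" using finX finO by (simp add: finite_PiE)
    have "marg Oc X C (induced_section X \<Omega> \<mu> \<xi> \<sigma>) t = (\<Sum>s\<in>?Set. \<Sum>\<^sub>\<infinity>l\<in>\<Omega>. F l s * \<mu> \<sigma> l)"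
      by (simp add: marg_def ind)
    also have "\<dots> = (\<Sum>\<^sub>\<infinity>l\<in>\<Omega>. \<Sum>s\<in>?Set. F l s * \<mu> \<sigma> l)"
      using fin summ[OF \<sigma>] by (intro infsum_finite_sum[symmetric]) auto
    also have "\<dots> = (\<Sum>\<^sub>\<infinity>l\<in>\<Omega>. (\<Prod>x\<in>C. \<xi> {x} l (pt x (t x))) * \<mu> \<sigma> l)"
    proof (rule infsum_cong)
      fix l assume l: "l \<in> \<Omega>"
      have "(\<Sum>s\<in>?Set. F l s) = (\<Prod>x\<in>C. \<xi> {x} l (pt x (t x))) * (\<Prod>x\<in>X - C. \<Sum>a\<in>Oc. \<xi> {x} l (pt x a))"
        unfolding F_def using marg_prod[OF finX finO C t, of "\<lambda>x a. \<xi> {x} l (pt x a)"] by simp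
      also have "(\<Prod>x\<in>X - C. \<Sum>a\<in>Oc. \<xi> {x} l (pt x a)) = 1"
        using xi1 l by (intro prod.neutral) auto
      finally have e: "(\<Sum>s\<in>?Set. F l s) = (\<Prod>x\<in>C. \<xi> {x} l (pt x (t x))) * 1" .
      have "(\<Sum>s\<in>?Set. F l s * \<mu> \<sigma> l) = (\<Sum>s\<in>?Set. F l s) * \<mu> \<sigma> l"
        by (rule sum_distrib_right[symmetric])
      then show "(\<Sum>s\<in>?Set. F l s * \<mu> \<sigma> l) = (\<Prod>x\<in>C. \<xi> {x} l (pt x (t x))) * \<mu> \<sigma> l"
        unfolding e by (simp only: mult_1_right)
    qed
    finally show ?thesis .
  qed
  have emptyPiE: "({} \<rightarrow>\<^sub>E Oc) = {(\<lambda>_. undefined)}" by simp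
  have G: "global_section X M S Oc st (induced_section X \<Omega> \<mu> \<xi>)"
    unfolding global_section_def
  proof (rule ballI, rule conjI)
    fix \<sigma> assume \<sigma>: "\<sigma> \<in> S"
    have inf1: "(\<Sum>\<^sub>\<infinity>l\<in>\<Omega>. \<mu> \<sigma> l) = 1" using muS[OF \<sigma>] by (simp add: infsumI)
    show "distr_on (X \<rightarrow>\<^sub>E Oc) (induced_section X \<Omega> \<mu> \<xi> \<sigma>)"
      unfolding distr_on_def
    proof (intro conjI ballI)
      show "finite (X \<rightarrow>\<^sub>E Oc)" using finX finO by (simp add: finite_PiE)
      fix s assume s: "s \<in> X \<rightarrow>\<^sub>E Oc"
      have "0 \<le> F l s * \<mu> \<sigma> l" if l: "l \<in> \<Omega>" for l
        using F01[OF l s] muN[OF \<sigma> l] by (intro mult_nonneg_nonneg) (simp_all only:)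
      then show "0 \<le> induced_section X \<Omega> \<mu> \<xi> \<sigma> s"
        unfolding ind by (rule infsum_nonneg)
    next
      have setE: "{s \<in> X \<rightarrow>\<^sub>E Oc. restrict s {} = (\<lambda>_. undefined)} = X \<rightarrow>\<^sub>E Oc"
        by (auto simp: restrict_def)
      have "sum (induced_section X \<Omega> \<mu> \<xi> \<sigma>) (X \<rightarrow>\<^sub>E Oc) = marg Oc X {} (induced_section X \<Omega> \<mu> \<xi> \<sigma>) (\<lambda>_. undefined)"
        unfolding marg_def setE ..
      also have "\<dots> = (\<Sum>\<^sub>\<infinity>l\<in>\<Omega>. (\<Prod>x\<in>{}. \<xi> {x} l (pt x undefined)) * \<mu> \<sigma> l)"
        by (rule M1[OF \<sigma>, of "{}" "\<lambda>_. undefined"]) simp_all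
      also have "\<dots> = 1" using inf1 by simp
      finally show "sum (induced_section X \<Omega> \<mu> \<xi> \<sigma>) (X \<rightarrow>\<^sub>E Oc) = 1" .
    qed
    show "\<forall>C\<in>M. \<forall>t\<in>C \<rightarrow>\<^sub>E Oc. marg Oc X C (induced_section X \<Omega> \<mu> \<xi> \<sigma>) t = st \<sigma> C t"
    proof (intro ballI)
      fix C t assume C: "C \<in> M" and t: "t \<in> C \<rightarrow>\<^sub>E Oc"
      show "marg Oc X C (induced_section X \<Omega> \<mu> \<xi> \<sigma>) t = st \<sigma> C t"
      proof (cases "C = {}")
        case True
        then have "t = (\<lambda>_. undefined)" using t by simp
        moreover have "st \<sigma> {} (\<lambda>_. undefined) = 1" using stD[OF \<sigma> C] True by (simp add: distr_on_def)
        ultimately show ?thesis using M1[OF \<sigma> CX[OF C] t] True inf1 by simp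
      next
        case False
        have CO: "C \<in> Op_meas M" using C False by (auto simp: Op_meas_def jointly_measurable_def)
        have "marg Oc X C (induced_section X \<Omega> \<mu> \<xi> \<sigma>) t = (\<Sum>\<^sub>\<infinity>l\<in>\<Omega>. \<xi> C l t * \<mu> \<sigma> l)"
          unfolding M1[OF \<sigma> CX[OF C] t]
          by (intro infsum_cong) (simp add: facD[OF CO _ t])
        also have "\<dots> = Op_stat M Oc st \<sigma> C t"
          using stat[OF \<sigma> CO] t by (simp add: Op_out_def infsumI)
        also have "\<dots> = st \<sigma> C t"
        proof -
          let ?C' = "SOME C'. C' \<in> M \<and> C \<subseteq> C'"
          have "?C' \<in> M \<and> C \<subseteq> ?C'" by (rule someI[of "\<lambda>C'. C' \<in> M \<and> C \<subseteq> C'" C]) (simp add: C)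
          then have "?C' = C" using nprop[OF C, of ?C'] by (simp add: psubset_eq)
          then show ?thesis using t by (simp add: Op_stat_def state_on_def marg_self)
        qed
        finally show ?thesis .
      qed
    qed
  qed
  have P3: "(\<Sum>t\<in>Omega_can X M S Oc st. xi_can X M S Oc st U t s * mu_can X M S Oc st d \<sigma> t)
            = (\<Sum>\<^sub>\<infinity>l\<in>\<Omega>. \<xi> U l s * \<mu> \<sigma> l)"
    if d: "global_section X M S Oc st d" and adm: "canonical_admissible X M S Oc st d"
      and \<sigma>: "\<sigma> \<in> S" and U: "U \<in> Op_meas M" and s: "s \<in> Op_out Oc U" for d \<sigma> U s
  proof -
    let ?R = "label_equiv X M S Oc st"
    let ?lift = "lift_can X M S Oc st"
    let ?Om = "Omega_can X M S Oc st"
    let ?C' = "SOME C'. C' \<in> M \<and> U \<subseteq> C'"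
    have C': "?C' \<in> M \<and> U \<subseteq> ?C'" using U unfolding Op_meas_def jointly_measurable_def
      by (metis (mono_tags, lifting) mem_Collect_eq someI_ex)
    have UX: "U \<subseteq> X" using C' CX by blast
    have dD: "\<And>C r. C \<in> M \<Longrightarrow> r \<in> C \<rightarrow>\<^sub>E Oc \<Longrightarrow> marg Oc X C (d \<sigma>) r = st \<sigma> C r"
      using d \<sigma> unfolding global_section_def by blast
    have admD: "\<And>s'. s' \<in> X \<rightarrow>\<^sub>E Oc \<Longrightarrow> (\<exists>(x, x')\<in>?R. s' x \<noteq> s' x') \<Longrightarrow> d \<sigma> s' = 0"
      using adm \<sigma> unfolding canonical_admissible_def by blast
    have RX: "?R \<subseteq> X \<times> X" by (auto simp: label_equiv_def)
    have Rrefl: "x \<in> X \<Longrightarrow> (x, x) \<in> ?R" for x by (auto simp: label_equiv_def)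
    have finQ: "finite (X // ?R)" using finite_quotient[OF finX RX] .
    have finOm: "finite ?Om" using finQ finO by (simp add: Omega_can_def label_quot_def finite_PiE)
    have liftin: "?lift t \<in> X \<rightarrow>\<^sub>E Oc" if "t \<in> ?Om" for t
      using that by (auto simp: lift_can_def Omega_can_def label_quot_def qmap_def intro: quotientI)
    have liftinj: "inj_on ?lift ?Om"
    proof (rule inj_onI)
      fix t1 t2 assume t1: "t1 \<in> ?Om" and t2: "t2 \<in> ?Om" and eq: "?lift t1 = ?lift t2"
      show "t1 = t2"
      proof
        fix c show "t1 c = t2 c"
        proof (cases "c \<in> X // ?R")
          case True
          then obtain x where x: "x \<in> X" "c = ?R `` {x}" by (rule quotientE)
          have "?lift t1 x = ?lift t2 x" using eq by simp
          then show ?thesis using x by (simp add: lift_can_def qmap_def)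
        next
          case False
          then show ?thesis using t1 t2 by (auto simp: Omega_can_def label_quot_def PiE_def extensional_def)
        qed
      qed
    qed
    have RHS: "(\<Sum>\<^sub>\<infinity>l\<in>\<Omega>. \<xi> U l s * \<mu> \<sigma> l) = marg Oc X U (d \<sigma>) s"
    proof -
      have "(\<Sum>\<^sub>\<infinity>l\<in>\<Omega>. \<xi> U l s * \<mu> \<sigma> l) = state_on M Oc st \<sigma> U s"
        using stat[OF \<sigma> U s] by (simp add: Op_stat_def infsumI)
      also have "\<dots> = marg Oc ?C' U (st \<sigma> ?C') s" by (simp add: state_on_def)
      also have "\<dots> = marg Oc ?C' U (\<lambda>r. marg Oc X ?C' (d \<sigma>) r) s"
        by (rule marg_cong) (rule dD[OF conjunct1[OF C'], symmetric])
      also have "\<dots> = marg Oc X U (d \<sigma>) s"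
        using C' CX finX finO by (intro marg_trans) auto
      finally show ?thesis .
    qed
    let ?T = "{t \<in> ?Om. restrict (?lift t) U = s}"
    have "(\<Sum>t\<in>?Om. xi_can X M S Oc st U t s * mu_can X M S Oc st d \<sigma> t)
        = (\<Sum>t\<in>?T. d \<sigma> (?lift t))"
    proof -
      have "(\<Sum>t\<in>?Om. xi_can X M S Oc st U t s * mu_can X M S Oc st d \<sigma> t)
          = (\<Sum>t\<in>?Om. if restrict (?lift t) U = s then d \<sigma> (?lift t) else 0)"
        by (rule sum.cong[OF refl]) (simp add: xi_can_def mu_can_def eq_commute[of s])
      also have "\<dots> = (\<Sum>t\<in>?T. d \<sigma> (?lift t))"
        by (rule sum.inter_filter[OF finOm, symmetric])
      finally show ?thesis .
    qed
    also have "\<dots> = (\<Sum>s'\<in>?lift ` ?T. d \<sigma> s')"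
      using liftinj by (subst sum.reindex) (auto intro: inj_on_subset)
    also have "\<dots> = (\<Sum>s'\<in>{s' \<in> X \<rightarrow>\<^sub>E Oc. restrict s' U = s}. d \<sigma> s')"
    proof (rule sum.mono_neutral_left)
      show "finite {s' \<in> X \<rightarrow>\<^sub>E Oc. restrict s' U = s}" using finX finO by (simp add: finite_PiE)
      show "?lift ` ?T \<subseteq> {s' \<in> X \<rightarrow>\<^sub>E Oc. restrict s' U = s}" using liftin by auto
      show "\<forall>s'\<in>{s' \<in> X \<rightarrow>\<^sub>E Oc. restrict s' U = s} - ?lift ` ?T. d \<sigma> s' = 0"
      proof
        fix s' assume s': "s' \<in> {s' \<in> X \<rightarrow>\<^sub>E Oc. restrict s' U = s} - ?lift ` ?T"
        show "d \<sigma> s' = 0"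
        proof (rule ccontr)
          assume nz: "d \<sigma> s' \<noteq> 0"
          have s'X: "s' \<in> X \<rightarrow>\<^sub>E Oc" using s' by blast
          have const: "\<forall>(x, x')\<in>?R. s' x = s' x'"
          proof (rule ccontr)
            assume "\<not> (\<forall>(x, x')\<in>?R. s' x = s' x')"
            then have "\<exists>(x, x')\<in>?R. s' x \<noteq> s' x'" by blast
            then show False using admD[OF s'X] nz by blast
          qed
          define t where "t = restrict (\<lambda>c. s' (SOME x. x \<in> c)) (X // ?R)"
          have tOm: "t \<in> ?Om"
          proof -
            have "s' (SOME x. x \<in> c) \<in> Oc" if c: "c \<in> X // ?R" for c
            proof -
              obtain x where x: "x \<in> X" "c = ?R `` {x}" using c by (rule quotientE)
              have "x \<in> c" using x Rrefl by auto
              then have "(SOME x. x \<in> c) \<in> c" by (rule someI)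
              then have "(SOME x. x \<in> c) \<in> X" using x RX by auto
              then show ?thesis using s' by auto
            qed
            then show ?thesis by (simp add: t_def Omega_can_def label_quot_def)
          qed
          have "?lift t = s'"
          proof
            fix x show "?lift t x = s' x"
            proof (cases "x \<in> X")
              case True
              have q: "qmap X M S Oc st x \<in> X // ?R" using True by (simp add: qmap_def quotientI)
              have "x \<in> ?R `` {x}" using Rrefl True by auto
              then have "(SOME y. y \<in> ?R `` {x}) \<in> ?R `` {x}" by (rule someI)
              then have "(x, SOME y. y \<in> ?R `` {x}) \<in> ?R" by simp
              then have "s' x = s' (SOME y. y \<in> ?R `` {x})" using const by blast
              then show ?thesis using True q by (simp add: lift_can_def t_def qmap_def)
            next
              case False
              then show ?thesis using s' by (auto simp: lift_can_def PiE_def extensional_def)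
            qed
          qed
          then have "s' \<in> ?lift ` ?T" using tOm s' by (auto intro!: image_eqI[of _ _ t])
          then show False using s' by blast
        qed
      qed
    qed
    also have "\<dots> = marg Oc X U (d \<sigma>) s" by (simp add: marg_def)
    finally show ?thesis using RHS by simp
  qed
  show ?thesis using G P3 unfolding sheaf_noncontextual_def by blast
qed

end
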